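(* For $r>0$, the sphere $\mathcal S_r=\{t\in V_N: S(t)=r\}$, regarded as a hypersurface in the quasi-Euclidean space $(V_N\setminus\{0\},n_{pq}(g;t))$ and equipped with the induced metric $\gamma$, is a space of constant curvature $h^2/r^2$: its Riemann curvature tensor equals $\frac{h^2}{r^2}(\gamma_{ik}\gamma_{jl}-\gamma_{il}\gamma_{jk})$.
   Context: Let $N\ge2$; points of $V_N=\mathbb{R}^N$ are $t=(t^1,\dots,t^N)$; indices $p,q$ run over $1,\dots,N$, repeated indices summed. $(r_{pq})$ is a symmetric positive-definite matrix with $r_{NN}=1$, $r_{Na}=0$ ($a<N$), and $S(t)=\sqrt{r_{pq}t^pt^q}$. Fix $g\in(-2,2)$, $h=\sqrt{1-g^2/4}$, $G=g/h$. The quasi-Euclidean metric tensor is $n_{pq}(g;t)=\frac1{h^2}r_{pq}-\frac14G^2L_pL_q$ with $L_p=r_{pq}t^q/S(t)$. *)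

theory Defs
  imports "HOL-Analysis.Analysis"
begin

definition hpar :: "real \<Rightarrow> real" where
  "hpar g = sqrt (1 - g^2 / 4)"

definition Gpar :: "real \<Rightarrow> real" where
  "Gpar g = g / hpar g"

definition Sfun :: "real^'n^'n \<Rightarrow> real^'n \<Rightarrow> real" where
  "Sfun R t = sqrt (\<Sum>p\<in>UNIV. \<Sum>q\<in>UNIV. R$p$q * t$p * t$q)"

definition Lcov :: "real^'n^'n \<Rightarrow> real^'n \<Rightarrow> 'n \<Rightarrow> real" where
  "Lcov R t p = (\<Sum>q\<in>UNIV. R$p$q * t$q) / Sfun R t"

definition nmetric :: "real^'n^'n \<Rightarrow> real \<Rightarrow> real^'n \<Rightarrow> 'n \<Rightarrow> 'n \<Rightarrow> real" where
  "nmetric R g t p q = R$p$q / (hpar g)^2 - (Gpar g)^2 / 4 * Lcov R t p * Lcov R t q"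

definition partial :: "'m::finite \<Rightarrow> (real^'m \<Rightarrow> real) \<Rightarrow> real^'m \<Rightarrow> real" where
  "partial i f u = frechet_derivative f (at u) (axis i 1)"

fun partials :: "'m::finite list \<Rightarrow> (real^'m \<Rightarrow> real) \<Rightarrow> real^'m \<Rightarrow> real" where
  "partials [] f = f"
| "partials (i # is) f = partial i (partials is f)"

definition smooth_on :: "(real^'m::finite) set \<Rightarrow> (real^'m \<Rightarrow> real) \<Rightarrow> bool" where
  "smooth_on U f \<longleftrightarrow> (\<forall>is. \<forall>u\<in>U. partials is f differentiable (at u))"

definition indmetric ::
  "real^'n^'n \<Rightarrow> real \<Rightarrow> (real^'m::finite \<Rightarrow> real^'n) \<Rightarrow> real^'m \<Rightarrow> real^'m^'m" where
  "indmetric R g \<phi> u = (\<chi> i j. \<Sum>p\<in>UNIV. \<Sum>q\<in>UNIV.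
      nmetric R g (\<phi> u) p q * partial i (\<lambda>w. \<phi> w $ p) u * partial j (\<lambda>w. \<phi> w $ q) u)"

definition christoffel :: "(real^'m::finite \<Rightarrow> real^'m^'m) \<Rightarrow> real^'m \<Rightarrow> 'm \<Rightarrow> 'm \<Rightarrow> 'm \<Rightarrow> real" where
  "christoffel gm u m i j = (\<Sum>l\<in>UNIV. (matrix_inv (gm u))$m$l / 2 *
      (partial i (\<lambda>w. gm w $ l $ j) u + partial j (\<lambda>w. gm w $ l $ i) u
       - partial l (\<lambda>w. gm w $ i $ j) u))"

text \<open>R^m_jkl = d_k Gamma^m_lj - d_l Gamma^m_kj + Gamma^p_lj Gamma^m_kp - Gamma^p_kj Gamma^m_lp,
  i.e. the components of R(d_k,d_l)d_j with R(X,Y)Z = nabla_X nabla_Y Z - nabla_Y nabla_X Z - nabla_[X,Y] Z.\<close>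
definition riemann_up :: "(real^'m::finite \<Rightarrow> real^'m^'m) \<Rightarrow> real^'m \<Rightarrow> 'm \<Rightarrow> 'm \<Rightarrow> 'm \<Rightarrow> 'm \<Rightarrow> real" where
  "riemann_up gm u m j k l =
     partial k (\<lambda>w. christoffel gm w m l j) u - partial l (\<lambda>w. christoffel gm w m k j) u
     + (\<Sum>p\<in>UNIV. christoffel gm u p l j * christoffel gm u m k p
                 - christoffel gm u p k j * christoffel gm u m l p)"

text \<open>R_ijkl = gamma_im R^m_jkl  ( = gamma(R(d_k,d_l)d_j, d_i) ).\<close>
definition riemann :: "(real^'m::finite \<Rightarrow> real^'m^'m) \<Rightarrow> real^'m \<Rightarrow> 'm \<Rightarrow> 'm \<Rightarrow> 'm \<Rightarrow> 'm \<Rightarrow> real" where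
  "riemann gm u i j k l = (\<Sum>m\<in>UNIV. gm u $ i $ m * riemann_up gm u m j k l)"

end

theory Submission
  imports Defs
begin

lemma partial_has: "(f has_derivative f') (at u) \<Longrightarrow> partial i f u = f' (axis i 1)"
  unfolding partial_def using frechet_derivative_at by metis

lemma partial_local:
  assumes "open U" "u \<in> U" "\<And>w. w \<in> U \<Longrightarrow> f w = g w"
  shows "partial i f u = partial i g u"
proof -
  have "\<And>f'. (f has_derivative f') (at u) \<longleftrightarrow> (g has_derivative f') (at u)"
    using has_derivative_transform_within_open[OF _ assms(1,2)] assms(3) by metis
  then show ?thesis unfolding partial_def frechet_derivative_def by simp
qed

lemma diff_local:
  assumes "open U" "u \<in> U" "\<And>w. w \<in> U \<Longrightarrow> f w = g w" "f differentiable at u"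
  shows "g differentiable at u"
  using has_derivative_transform_within_open[OF _ assms(1,2)] assms(3,4)
  unfolding differentiable_def by metis

lemma fd: "f differentiable at u \<Longrightarrow> (f has_derivative frechet_derivative f (at u)) (at u)"
  using frechet_derivative_works by blast

lemma partial_add: "f differentiable at u \<Longrightarrow> g differentiable at u \<Longrightarrow>
  partial i (\<lambda>w. f w + g w) u = partial i f u + partial i g u"
  using partial_has[OF has_derivative_add[OF fd fd]] by (simp add: partial_def)

lemma partial_diff: "f differentiable at u \<Longrightarrow> g differentiable at u \<Longrightarrow>
  partial i (\<lambda>w. f w - g w) u = partial i f u - partial i g u"
  using partial_has[OF has_derivative_diff[OF fd fd]] by (simp add: partial_def)

lemma partial_mult: "f differentiable at u \<Longrightarrow> g differentiable at u \<Longrightarrow>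
  partial i (\<lambda>w. f w * g w) u = f u * partial i g u + partial i f u * g u"
  using partial_has[OF has_derivative_mult[OF fd fd]] by (simp add: partial_def)

lemma partial_cmult: "f differentiable at u \<Longrightarrow>
  partial i (\<lambda>w. c * f w) u = c * partial i f u"
  using partial_has[OF has_derivative_mult[OF has_derivative_const fd]] by (simp add: partial_def)

lemma partial_const: "partial i (\<lambda>w. c) u = 0"
  unfolding partial_def by (metis frechet_derivative_at has_derivative_const)

lemma partial_sum: "finite S \<Longrightarrow> (\<And>x. x \<in> S \<Longrightarrow> f x differentiable at u) \<Longrightarrow>
  partial i (\<lambda>w. \<Sum>x\<in>S. f x w) u = (\<Sum>x\<in>S. partial i (f x) u)"
  using partial_has[OF has_derivative_sum[of S f "\<lambda>x. frechet_derivative (f x) (at u)", OF fd]]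
  by (simp add: partial_def)

lemma line_deriv:
  fixes F :: "real^'m \<Rightarrow> real"
  assumes "F differentiable at (v + x *\<^sub>R d)"
  shows "((\<lambda>t. F (v + t *\<^sub>R d)) has_real_derivative frechet_derivative F (at (v + x *\<^sub>R d)) d) (at x)"
proof -
  let ?F' = "frechet_derivative F (at (v + x *\<^sub>R d))"
  have h1: "((\<lambda>t. v + t *\<^sub>R d) has_derivative (\<lambda>t. t *\<^sub>R d)) (at x)"
    by (auto intro!: derivative_eq_intros)
  have h2: "(F has_derivative ?F') (at (v + x *\<^sub>R d))"
    using assms frechet_derivative_works by blast
  have "((F \<circ> (\<lambda>t. v + t *\<^sub>R d)) has_derivative (?F' \<circ> (\<lambda>t. t *\<^sub>R d))) (at x)"
    using diff_chain_at[OF h1 h2] .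
  moreover have "linear ?F'" using h2 has_derivative_linear by blast
  then have "(?F' \<circ> (\<lambda>t. t *\<^sub>R d)) = (*) (?F' d)"
    by (auto simp: fun_eq_iff linear_scale mult.commute)
  ultimately show ?thesis unfolding has_field_derivative_def by (simp add: o_def)
qed


lemma mvt_rect:
  fixes f :: "real^'m \<Rightarrow> real"
  assumes s: "s > 0"
    and D1: "\<And>x y. 0 \<le> x \<Longrightarrow> x \<le> s \<Longrightarrow> 0 \<le> y \<Longrightarrow> y \<le> s \<Longrightarrow>
               f differentiable at (u + x *\<^sub>R axis i 1 + y *\<^sub>R axis j 1)"
    and D2: "\<And>x y. 0 \<le> x \<Longrightarrow> x \<le> s \<Longrightarrow> 0 \<le> y \<Longrightarrow> y \<le> s \<Longrightarrow>
               partial i f differentiable at (u + x *\<^sub>R axis i 1 + y *\<^sub>R axis j 1)"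
  shows "\<exists>x y. 0 < x \<and> x < s \<and> 0 < y \<and> y < s \<and>
     f (u + s *\<^sub>R axis i 1 + s *\<^sub>R axis j 1) - f (u + s *\<^sub>R axis i 1) - f (u + s *\<^sub>R axis j 1) + f u
      = s^2 * partial j (partial i f) (u + x *\<^sub>R axis i 1 + y *\<^sub>R axis j 1)"
proof -
  define v where "v = u + s *\<^sub>R axis j 1"
  define psi where "psi x = f (v + x *\<^sub>R axis i 1) - f (u + x *\<^sub>R axis i 1)" for x
  define psi' where "psi' x = partial i f (v + x *\<^sub>R axis i 1) - partial i f (u + x *\<^sub>R axis i 1)" for x
  have der1: "(psi has_real_derivative psi' x) (at x)" if "0 \<le> x" "x \<le> s" for x
  proof -
    have eqa: "v + x *\<^sub>R axis i 1 = u + x *\<^sub>R axis i 1 + s *\<^sub>R axis j 1"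
      unfolding v_def by (simp add: algebra_simps)
    have a: "f differentiable at (v + x *\<^sub>R axis i 1)"
      unfolding eqa using D1[of x s] that s by simp
    have b: "f differentiable at (u + x *\<^sub>R axis i 1)"
      using D1[of x 0] that s by simp
    show ?thesis unfolding psi_def psi'_def partial_def
      by (rule DERIV_diff[OF line_deriv[OF a] line_deriv[OF b]])
  qed
  have "\<exists>z>0. z < s \<and> psi s - psi 0 = (s - 0) * psi' z"
    by (rule MVT2[OF s]) (rule der1)
  then obtain xi where xi: "0 < xi" "xi < s" "psi s - psi 0 = s * psi' xi" by auto
  define w where "w = u + xi *\<^sub>R axis i 1"
  define chi where "chi y = partial i f (w + y *\<^sub>R axis j 1)" for y
  define chi' where "chi' y = partial j (partial i f) (w + y *\<^sub>R axis j 1)" for y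
  have der2: "(chi has_real_derivative chi' y) (at y)" if "0 \<le> y" "y \<le> s" for y
  proof -
    have "partial i f differentiable at (w + y *\<^sub>R axis j 1)"
      unfolding w_def using D2[of xi y] that xi by simp
    then show ?thesis unfolding chi_def chi'_def partial_def[of j] by (rule line_deriv)
  qed
  have "\<exists>z>0. z < s \<and> chi s - chi 0 = (s - 0) * chi' z"
    by (rule MVT2[OF s]) (rule der2)
  then obtain eta where eta: "0 < eta" "eta < s" "chi s - chi 0 = s * chi' eta" by auto
  have e1: "w + s *\<^sub>R axis j 1 = v + xi *\<^sub>R axis i 1"
    unfolding v_def w_def by (simp add: algebra_simps)
  have "chi s - chi 0 = psi' xi"
    unfolding chi_def psi'_def e1 by (simp add: w_def)
  then have "psi s - psi 0 = s^2 * chi' eta"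
    using xi(3) eta(3) by (simp add: power2_eq_square)
  moreover have eqb: "v + s *\<^sub>R axis i 1 = u + s *\<^sub>R axis i 1 + s *\<^sub>R axis j 1"
    unfolding v_def by (simp add: algebra_simps)
  have "psi s - psi 0 = f (u + s *\<^sub>R axis i 1 + s *\<^sub>R axis j 1) - f (u + s *\<^sub>R axis i 1) - f (u + s *\<^sub>R axis j 1) + f u"
    unfolding psi_def eqb by (simp add: v_def)
  ultimately have "f (u + s *\<^sub>R axis i 1 + s *\<^sub>R axis j 1) - f (u + s *\<^sub>R axis i 1) - f (u + s *\<^sub>R axis j 1) + f u
      = s^2 * partial j (partial i f) (u + xi *\<^sub>R axis i 1 + eta *\<^sub>R axis j 1)"
    unfolding chi'_def w_def by simp
  then show ?thesis using xi(1,2) eta(1,2) by blast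
qed

lemma schwarz:
  fixes f :: "real^'m \<Rightarrow> real"
  assumes U: "open U" "u \<in> U"
    and d0: "\<forall>w\<in>U. f differentiable at w"
    and di: "\<forall>w\<in>U. partial i f differentiable at w"
    and dj: "\<forall>w\<in>U. partial j f differentiable at w"
    and cij: "isCont (partial j (partial i f)) u"
    and cji: "isCont (partial i (partial j f)) u"
  shows "partial j (partial i f) u = partial i (partial j f) u"
proof (rule ccontr)
  let ?A = "partial j (partial i f) u" and ?B = "partial i (partial j f) u"
  assume ne: "?A \<noteq> ?B"
  define e where "e = \<bar>?A - ?B\<bar> / 2"
  have e: "e > 0" using ne unfolding e_def by simp
  obtain d1 where d1: "d1 > 0" "\<forall>w. dist w u < d1 \<longrightarrow> dist (partial j (partial i f) w) ?A < e"
    using cij e unfolding continuous_at_eps_delta by blast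
  obtain d2 where d2: "d2 > 0" "\<forall>w. dist w u < d2 \<longrightarrow> dist (partial i (partial j f) w) ?B < e"
    using cji e unfolding continuous_at_eps_delta by blast
  obtain d3 where d3: "d3 > 0" "ball u d3 \<subseteq> U"
    using U open_contains_ball by blast
  define d where "d = min d1 (min d2 d3)"
  have d: "d > 0" using d1 d2 d3 unfolding d_def by simp
  define s where "s = d / 4"
  have s: "s > 0" using d unfolding s_def by simp
  have near: "dist (u + x *\<^sub>R axis a 1 + y *\<^sub>R axis b 1) u < d"
    if "0 \<le> x" "x \<le> s" "0 \<le> y" "y \<le> s" for x y and a b :: 'm
  proof -
    have "dist (u + x *\<^sub>R axis a 1 + y *\<^sub>R axis b 1) u = norm (x *\<^sub>R (axis a 1::real^'m) + y *\<^sub>R axis b 1)"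
      by (simp add: dist_norm algebra_simps)
    also have "\<dots> \<le> x + y"
      using norm_triangle_ineq[of "x *\<^sub>R (axis a 1::real^'m)" "y *\<^sub>R axis b 1"] that
      by (simp add: norm_axis_1)
    also have "\<dots> < d" using that s unfolding s_def by simp
    finally show ?thesis .
  qed
  have inU: "u + x *\<^sub>R axis a 1 + y *\<^sub>R axis b 1 \<in> U"
    if "0 \<le> x" "x \<le> s" "0 \<le> y" "y \<le> s" for x y and a b :: 'm
    using near[OF that, of a b] d3(2) unfolding d_def by (auto simp: dist_commute)
  obtain x y where xy: "0 < x" "x < s" "0 < y" "y < s"
     "f (u + s *\<^sub>R axis i 1 + s *\<^sub>R axis j 1) - f (u + s *\<^sub>R axis i 1) - f (u + s *\<^sub>R axis j 1) + f u
      = s^2 * partial j (partial i f) (u + x *\<^sub>R axis i 1 + y *\<^sub>R axis j 1)"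
    using mvt_rect[OF s, of f u i j] inU d0 di by blast
  obtain x' y' where xy': "0 < x'" "x' < s" "0 < y'" "y' < s"
     "f (u + s *\<^sub>R axis j 1 + s *\<^sub>R axis i 1) - f (u + s *\<^sub>R axis j 1) - f (u + s *\<^sub>R axis i 1) + f u
      = s^2 * partial i (partial j f) (u + x' *\<^sub>R axis j 1 + y' *\<^sub>R axis i 1)"
    using mvt_rect[OF s, of f u j i] inU d0 dj by blast
  have "s^2 * partial j (partial i f) (u + x *\<^sub>R axis i 1 + y *\<^sub>R axis j 1)
      = s^2 * partial i (partial j f) (u + x' *\<^sub>R axis j 1 + y' *\<^sub>R axis i 1)"
    using xy(5) xy'(5) by (simp add: algebra_simps)
  then have eq: "partial j (partial i f) (u + x *\<^sub>R axis i 1 + y *\<^sub>R axis j 1)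
      = partial i (partial j f) (u + x' *\<^sub>R axis j 1 + y' *\<^sub>R axis i 1)"
    using s by simp
  have "dist (partial j (partial i f) (u + x *\<^sub>R axis i 1 + y *\<^sub>R axis j 1)) ?A < e"
    using d1(2) near[of x y i j] xy unfolding d_def by simp
  moreover have "dist (partial i (partial j f) (u + x' *\<^sub>R axis j 1 + y' *\<^sub>R axis i 1)) ?B < e"
    using d2(2) near[of x' y' j i] xy' unfolding d_def by simp
  ultimately have "\<bar>?A - ?B\<bar> < 2 * e" using eq by (simp add: dist_real_def)
  then show False unfolding e_def by simp
qed

lemma differentiable_prod_at:
  fixes f :: "'i \<Rightarrow> real^'m \<Rightarrow> real"
  assumes "\<And>i. i \<in> I \<Longrightarrow> f i differentiable at u"
  shows "(\<lambda>w. \<Prod>i\<in>I. f i w) differentiable at u"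
  using has_derivative_prod[of I f "\<lambda>i. frechet_derivative (f i) (at u)", OF fd[OF assms]]
  unfolding differentiable_def by blast

lemma differentiable_sum_at:
  fixes f :: "'i \<Rightarrow> real^'m \<Rightarrow> real"
  assumes "\<And>i. i \<in> I \<Longrightarrow> f i differentiable at u"
  shows "(\<lambda>w. \<Sum>i\<in>I. f i w) differentiable at u"
  using has_derivative_sum[of I f "\<lambda>i. frechet_derivative (f i) (at u)", OF fd[OF assms]]
  unfolding differentiable_def by blast

lemma det_differentiable:
  fixes M :: "real^'m \<Rightarrow> real^'k^'k"
  assumes "\<And>i j. (\<lambda>w. M w $ i $ j) differentiable at u"
  shows "(\<lambda>w. det (M w)) differentiable at u"
  unfolding det_def
  apply (rule differentiable_sum_at)
  apply (rule differentiable_mult)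
   apply simp
  apply (rule differentiable_prod_at)
  apply (rule assms)
  done

lemma matrix_inv_props:
  fixes A :: "real^'k^'k"
  assumes "det A \<noteq> 0"
  shows "A ** matrix_inv A = mat 1" "matrix_inv A ** A = mat 1"
proof -
  have "invertible A" using assms invertible_det_nz by blast
  then have "\<exists>A'. A ** A' = mat 1 \<and> A' ** A = mat 1" unfolding invertible_def by blast
  then have "A ** matrix_inv A = mat 1 \<and> matrix_inv A ** A = mat 1"
    unfolding matrix_inv_def by (rule someI_ex)
  then show "A ** matrix_inv A = mat 1" "matrix_inv A ** A = mat 1" by auto
qed

lemma inv_entry:
  fixes A :: "real^'k^'k"
  assumes "det A \<noteq> 0"
  shows "matrix_inv A $ m $ l = det (\<chi> i j. if j = m then axis l 1 $ i else A $ i $ j) / det A"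
proof -
  define x where "x = (\<chi> k. matrix_inv A $ k $ l)"
  have "A *v x = axis l 1"
  proof -
    have "(A *v x) $ i = (A ** matrix_inv A) $ i $ l" for i
      unfolding x_def by (simp add: matrix_vector_mult_def matrix_matrix_mult_def)
    then show ?thesis using matrix_inv_props(1)[OF assms]
      by (simp add: vec_eq_iff mat_def axis_def)
  qed
  then have "x = (\<chi> k. det (\<chi> i j. if j = k then axis l 1 $ i else A $ i $ j) / det A)"
    using cramer[OF assms] by blast
  then have "x $ m = det (\<chi> i j. if j = m then axis l 1 $ i else A $ i $ j) / det A" by simp
  then show ?thesis unfolding x_def by simp
qed

lemma inv_differentiable:
  fixes M :: "real^'m \<Rightarrow> real^'k^'k"
  assumes U: "open U" "u \<in> U" and d: "\<And>i j. (\<lambda>w. M w $ i $ j) differentiable at u"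
    and nz: "\<And>w. w \<in> U \<Longrightarrow> det (M w) \<noteq> 0"
  shows "(\<lambda>w. matrix_inv (M w) $ m $ l) differentiable at u"
proof (rule diff_local[OF U])
  show "(\<lambda>w. det (\<chi> i j. if j = m then axis l 1 $ i else M w $ i $ j) / det (M w)) differentiable at u"
  proof (rule differentiable_divide)
    show "(\<lambda>w. det (\<chi> i j. if j = m then axis l 1 $ i else M w $ i $ j)) differentiable at u"
      apply (rule det_differentiable)
      subgoal for i j by (cases "j = m") (simp_all add: d)
      done
    show "(\<lambda>w. det (M w)) differentiable at u" by (rule det_differentiable[OF d])
    show "det (M u) \<noteq> 0" using nz U by blast
  qed
  show "\<And>w. w \<in> U \<Longrightarrow> det (\<chi> i j. if j = m then axis l 1 $ i else M w $ i $ j) / det (M w)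
      = matrix_inv (M w) $ m $ l"
    using inv_entry[OF nz] by simp
qed

lemma hyperplane_in_range:
  fixes D :: "real^'m \<Rightarrow> real^'n"
  assumes "linear D" "inj D" "CARD('m) + 1 = CARD('n)" "subspace H" "H \<noteq> UNIV" "range D \<subseteq> H"
  shows "H \<subseteq> range D"
proof -
  have d1: "dim (range D) = CARD('m)"
    using dim_image_eq[OF assms(1), of UNIV] assms(2) by (simp add: inj_on_def)
  have "span H \<subset> span (UNIV::(real^'n) set)"
  proof -
    have e1: "span H = H" using assms(4) by (simp only: span_eq_iff)
    have e2: "span (UNIV::(real^'n) set) = UNIV" by simp
    show ?thesis unfolding e1 e2 using assms(5) by blast
  qed
  then have "dim H < dim (UNIV::(real^'n) set)" by (rule dim_psubset)
  then have "dim H \<le> dim (range D)" using d1 assms(3) by simp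
  then have "span (range D) = span H" using dim_eq_span[OF assms(6)] by blast
  moreover have "subspace (range D)" using assms(1) by (metis linear_subspace_image subspace_UNIV)
  ultimately show ?thesis using assms(4) span_eq_iff by blast
qed

definition Bf :: "real^'n^'n \<Rightarrow> real^'n \<Rightarrow> real^'n \<Rightarrow> real" where
  "Bf R x y = (\<Sum>p\<in>UNIV. \<Sum>q\<in>UNIV. R$p$q * x$p * y$q)"

lemma Bf_add_left: "Bf R (x + y) z = Bf R x z + Bf R y z"
  unfolding Bf_def by (simp add: algebra_simps sum.distrib)
lemma Bf_add_right: "Bf R z (x + y) = Bf R z x + Bf R z y"
  unfolding Bf_def by (simp add: algebra_simps sum.distrib)
lemma Bf_diff_left: "Bf R (x - y) z = Bf R x z - Bf R y z"
  unfolding Bf_def by (simp add: algebra_simps sum_subtractf)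
lemma Bf_diff_right: "Bf R z (x - y) = Bf R z x - Bf R z y"
  unfolding Bf_def by (simp add: algebra_simps sum_subtractf)
lemma Bf_scale_left: "Bf R (c *\<^sub>R x) z = c * Bf R x z"
  unfolding Bf_def by (simp add: algebra_simps sum_distrib_left)
lemma Bf_scale_right: "Bf R z (c *\<^sub>R x) = c * Bf R z x"
  unfolding Bf_def by (simp add: algebra_simps sum_distrib_left)
lemma Bf_sum_left: "Bf R (\<Sum>m\<in>S. f m) z = (\<Sum>m\<in>S. Bf R (f m) z)"
proof (induction S rule: infinite_finite_induct)
  case (infinite A) then show ?case by (simp add: Bf_def)
next
  case empty then show ?case by (simp add: Bf_def)
next
  case (insert x F) then show ?case by (simp add: Bf_add_left)
qed
lemma Bf_sum_right: "Bf R z (\<Sum>m\<in>S. f m) = (\<Sum>m\<in>S. Bf R z (f m))"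
proof (induction S rule: infinite_finite_induct)
  case (infinite A) then show ?case by (simp add: Bf_def)
next
  case empty then show ?case by (simp add: Bf_def)
next
  case (insert x F) then show ?case by (simp add: Bf_add_right)
qed
lemma Bf_zero_left: "Bf R 0 z = 0" and Bf_zero_right: "Bf R z 0 = 0"
  unfolding Bf_def by simp_all

lemma Bf_sym: "\<forall>p q. R$p$q = R$q$p \<Longrightarrow> Bf R x y = Bf R y x"
  unfolding Bf_def
  apply (subst sum.swap)
  apply (intro sum.cong refl)
  apply (simp add: mult.commute mult.left_commute)
  done

lemma dsum2:
  fixes F :: "'a \<Rightarrow> 'b \<Rightarrow> real^'m \<Rightarrow> real"
  assumes "\<And>p q. (\<lambda>w. F p q w) differentiable at u"
  shows "(\<lambda>w. \<Sum>p\<in>S. \<Sum>q\<in>T. F p q w) differentiable at u"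
  apply (rule differentiable_sum_at[where f = "\<lambda>p w. \<Sum>q\<in>T. F p q w"])
  apply (rule differentiable_sum_at[where f = "\<lambda>q w. F _ q w"])
  apply (rule assms)
  done

lemma Bf_differentiable:
  fixes X Y :: "real^'m \<Rightarrow> real^'n"
  assumes "\<And>p. (\<lambda>w. X w $ p) differentiable at u" "\<And>p. (\<lambda>w. Y w $ p) differentiable at u"
  shows "(\<lambda>w. Bf R (X w) (Y w)) differentiable at u"
  unfolding Bf_def
  by (rule dsum2[where F = "\<lambda>p q w. R$p$q * X w$p * Y w$q"])
     (intro differentiable_mult differentiable_const assms)

lemma Bf_partial:
  fixes X Y :: "real^'m \<Rightarrow> real^'n"
  assumes dX: "\<And>p. (\<lambda>w. X w $ p) differentiable at u" and dY: "\<And>p. (\<lambda>w. Y w $ p) differentiable at u"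
  shows "partial i (\<lambda>w. Bf R (X w) (Y w)) u
     = Bf R (\<chi> p. partial i (\<lambda>w. X w $ p) u) (Y u) + Bf R (X u) (\<chi> p. partial i (\<lambda>w. Y w $ p) u)"
proof -
  have "partial i (\<lambda>w. Bf R (X w) (Y w)) u
      = (\<Sum>p\<in>UNIV. partial i (\<lambda>w. \<Sum>q\<in>UNIV. R$p$q * X w$p * Y w$q) u)"
    unfolding Bf_def
    by (rule partial_sum)
      (auto intro!: differentiable_sum_at[where f = "\<lambda>q w. R$_$q * X w$_ * Y w$q"] differentiable_mult differentiable_const dX dY)
  also have "\<dots> = (\<Sum>p\<in>UNIV. \<Sum>q\<in>UNIV. partial i (\<lambda>w. (R$p$q * X w$p) * Y w$q) u)"
    by (intro sum.cong refl partial_sum)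
       (auto intro!: differentiable_sum_at differentiable_mult differentiable_const dX dY)
  also have "\<dots> = (\<Sum>p\<in>UNIV. \<Sum>q\<in>UNIV. (R$p$q * X u$p) * partial i (\<lambda>w. Y w$q) u
       + (R$p$q * partial i (\<lambda>w. X w$p) u) * Y u$q)"
    by (intro sum.cong refl, subst partial_mult)
       (auto intro!: differentiable_mult differentiable_const dX dY simp: partial_cmult dX)
  also have "\<dots> = Bf R (\<chi> p. partial i (\<lambda>w. X w $ p) u) (Y u) + Bf R (X u) (\<chi> p. partial i (\<lambda>w. Y w $ p) u)"
    unfolding Bf_def by (simp add: sum.distrib algebra_simps)
  finally show ?thesis .
qed

lemma lin_expand:
  fixes L :: "real^'m \<Rightarrow> real"
  assumes lin: "linear L"
  shows "L x = (\<Sum>i\<in>UNIV. x$i * L (axis i 1))"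
proof -
  have "L x = L (\<Sum>i\<in>UNIV. x$i *\<^sub>R axis i 1)"
    using basis_expansion[of x] by (simp add: scalar_mult_eq_scaleR)
  also have "\<dots> = (\<Sum>i\<in>UNIV. x$i * L (axis i 1))"
    by (simp add: linear_sum[OF lin] linear_scale[OF lin])
  finally show ?thesis .
qed

lemma vec_deriv:
  fixes F :: "real^'m \<Rightarrow> real^'n"
  assumes "\<And>p. (\<lambda>v. F v $ p) differentiable at w"
  shows "(F has_derivative (\<lambda>h. \<chi> p. frechet_derivative (\<lambda>v. F v $ p) (at w) h)) (at w)"
proof (subst has_derivative_componentwise_within, intro ballI)
  fix b :: "real^'n" assume "b \<in> Basis"
  then obtain p where b: "b = axis p 1" by (auto simp: Basis_vec_def)
  show "((\<lambda>x. F x \<bullet> b) has_derivative (\<lambda>x. (\<chi> p. frechet_derivative (\<lambda>v. F v $ p) (at w) x) \<bullet> b)) (at w)"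
    unfolding b inner_axis using fd[OF assms[of p]] by simp
qed

definition av :: "(real^'m \<Rightarrow> real^'n) \<Rightarrow> 'm \<Rightarrow> real^'m \<Rightarrow> real^'n" where
  "av \<phi> i w = (\<chi> p. partial i (\<lambda>v. \<phi> v $ p) w)"

definition bv :: "(real^'m \<Rightarrow> real^'n) \<Rightarrow> 'm \<Rightarrow> 'm \<Rightarrow> real^'m \<Rightarrow> real^'n" where
  "bv \<phi> i j w = (\<chi> p. partial i (partial j (\<lambda>v. \<phi> v $ p)) w)"

lemma av_comp: "(\<lambda>v. av \<phi> j v $ p) = partial j (\<lambda>v. \<phi> v $ p)"
  by (simp add: av_def)

lemma bv_comp: "(\<lambda>v. bv \<phi> i j v $ p) = partial i (partial j (\<lambda>v. \<phi> v $ p))"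
  by (simp add: bv_def)

locale sph0 =
  fixes R :: "real^'n^'n" and r c :: real and U :: "(real^'m) set"
    and \<phi> :: "real^'m \<Rightarrow> real^'n"
  assumes dimM: "CARD('m) + 1 = CARD('n)"
    and Rsym: "\<forall>p q. R$p$q = R$q$p"
    and Rpos: "\<forall>x. x \<noteq> 0 \<longrightarrow> Bf R x x > 0"
    and r: "r > 0" and c: "c > 0"
    and U: "open U"
    and sm: "\<forall>p. smooth_on U (\<lambda>u. \<phi> u $ p)"
    and imm: "\<forall>u\<in>U. inj (frechet_derivative \<phi> (at u))"
    and sph: "\<forall>u\<in>U. Bf R (\<phi> u) (\<phi> u) = r^2"
begin

lemma dps: "w \<in> U \<Longrightarrow> partials is (\<lambda>v. \<phi> v $ p) differentiable at w"
  using sm unfolding smooth_on_def by blast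

lemma d0: "w \<in> U \<Longrightarrow> (\<lambda>v. \<phi> v $ p) differentiable at w"
  using dps[of w "[]"] by simp
lemma d1: "w \<in> U \<Longrightarrow> partial j (\<lambda>v. \<phi> v $ p) differentiable at w"
  using dps[of w "[j]"] by simp
lemma d2: "w \<in> U \<Longrightarrow> partial i (partial j (\<lambda>v. \<phi> v $ p)) differentiable at w"
  using dps[of w "[i,j]"] by simp
lemma d3: "w \<in> U \<Longrightarrow> partial k (partial i (partial j (\<lambda>v. \<phi> v $ p))) differentiable at w"
  using dps[of w "[k,i,j]"] by simp

lemma da: "w \<in> U \<Longrightarrow> (\<lambda>v. av \<phi> j v $ p) differentiable at w"
  unfolding av_comp by (rule d1)
lemma db: "w \<in> U \<Longrightarrow> (\<lambda>v. bv \<phi> i j v $ p) differentiable at w"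
  unfolding bv_comp by (rule d2)

lemma Bsym: "Bf R x y = Bf R y x"
  using Rsym by (rule Bf_sym)

lemma F2: assumes w: "w \<in> U" shows "Bf R (av \<phi> i w) (\<phi> w) = 0"
proof -
  have "partial i (\<lambda>v. Bf R (\<phi> v) (\<phi> v)) w = partial i (\<lambda>v. r^2) w"
    by (rule partial_local[OF U w]) (simp add: sph)
  also have "\<dots> = 0" by (rule partial_const)
  finally have "Bf R (av \<phi> i w) (\<phi> w) + Bf R (\<phi> w) (av \<phi> i w) = 0"
    using Bf_partial[of "\<phi>" w "\<phi>" i R, OF d0[OF w] d0[OF w]] by (simp add: av_def)
  then show ?thesis using Bsym[of "\<phi> w" "av \<phi> i w"] by simp
qed

lemma F3: assumes w: "w \<in> U" shows "Bf R (bv \<phi> i j w) (\<phi> w) = - Bf R (av \<phi> j w) (av \<phi> i w)"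
proof -
  have "partial i (\<lambda>v. Bf R (av \<phi> j v) (\<phi> v)) w = partial i (\<lambda>v. 0) w"
    by (rule partial_local[OF U w]) (simp add: F2)
  also have "\<dots> = 0" by (rule partial_const)
  finally have "Bf R (\<chi> p. partial i (\<lambda>v. av \<phi> j v $ p) w) (\<phi> w) + Bf R (av \<phi> j w) (\<chi> p. partial i (\<lambda>v. \<phi> v $ p) w) = 0"
    using Bf_partial[of "av \<phi> j" w "\<phi>" i R, OF da[OF w] d0[OF w]] by simp
  then show ?thesis unfolding av_comp by (simp add: bv_def av_def[symmetric])
qed

lemma F4: assumes w: "w \<in> U" shows "bv \<phi> i j w = bv \<phi> j i w"
proof -
  have "partial i (partial j (\<lambda>v. \<phi> v $ p)) w = partial j (partial i (\<lambda>v. \<phi> v $ p)) w" for p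
  proof (rule schwarz[OF U w])
    show "\<forall>w\<in>U. (\<lambda>v. \<phi> v $ p) differentiable at w" using d0 by blast
    show "\<forall>w\<in>U. partial j (\<lambda>v. \<phi> v $ p) differentiable at w" using d1 by blast
    show "\<forall>w\<in>U. partial i (\<lambda>v. \<phi> v $ p) differentiable at w" using d1 by blast
    show "isCont (partial i (partial j (\<lambda>v. \<phi> v $ p))) w"
      using d2[OF w] differentiable_imp_continuous_within by blast
    show "isCont (partial j (partial i (\<lambda>v. \<phi> v $ p))) w"
      using d2[OF w] differentiable_imp_continuous_within by blast
  qed
  then show ?thesis by (simp add: bv_def vec_eq_iff)
qed

lemma Dphi: assumes w: "w \<in> U"
  shows "frechet_derivative \<phi> (at w) x = (\<Sum>i\<in>UNIV. x$i *\<^sub>R av \<phi> i w)"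
proof -
  have h: "(\<phi> has_derivative (\<lambda>h. \<chi> p. frechet_derivative (\<lambda>v. \<phi> v $ p) (at w) h)) (at w)"
    by (rule vec_deriv) (rule d0[OF w])
  then have "frechet_derivative \<phi> (at w) = (\<lambda>h. \<chi> p. frechet_derivative (\<lambda>v. \<phi> v $ p) (at w) h)"
    using frechet_derivative_at by metis
  moreover have "frechet_derivative (\<lambda>v. \<phi> v $ p) (at w) x = (\<Sum>i\<in>UNIV. x$i * av \<phi> i w $ p)" for p
  proof -
    have "linear (frechet_derivative (\<lambda>v. \<phi> v $ p) (at w))"
      using fd[OF d0[OF w]] has_derivative_linear by blast
    then show ?thesis by (subst lin_expand) (simp_all add: av_def partial_def)
  qed
  ultimately show ?thesis by (simp add: vec_eq_iff sum_component)
qed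

lemma Dlin: assumes w: "w \<in> U" shows "linear (frechet_derivative \<phi> (at w))"
proof -
  have "(\<phi> has_derivative (\<lambda>h. \<chi> p. frechet_derivative (\<lambda>v. \<phi> v $ p) (at w) h)) (at w)"
    by (rule vec_deriv) (rule d0[OF w])
  then have "\<phi> differentiable at w" unfolding differentiable_def by blast
  then show ?thesis using fd has_derivative_linear by blast
qed

lemma F8: assumes w: "w \<in> U" and v: "Bf R v (\<phi> w) = 0"
  shows "\<exists>z. v = (\<Sum>i\<in>UNIV. z$i *\<^sub>R av \<phi> i w)"
proof -
  let ?D = "frechet_derivative \<phi> (at w)"
  let ?H = "{v. Bf R v (\<phi> w) = 0}"
  have sub: "subspace ?H"
    unfolding subspace_def by (simp add: Bf_zero_left Bf_add_left Bf_scale_left)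
  have "\<phi> w \<notin> ?H" using sph w r by simp
  then have ne: "?H \<noteq> UNIV" by blast
  have "range ?D \<subseteq> ?H"
    by (auto simp: Dphi[OF w] Bf_sum_left Bf_scale_left F2[OF w])
  then have "?H \<subseteq> range ?D"
    using hyperplane_in_range[OF Dlin[OF w] imm[rule_format, OF w] dimM sub ne] by blast
  then show ?thesis using v by (auto simp: Dphi[OF w])
qed

end

locale sph = sph0 R r c U \<phi> for R :: "real^'n^'n" and r c :: real and U :: "(real^'m) set"
    and \<phi> :: "real^'m \<Rightarrow> real^'n" +
  fixes gm :: "real^'m \<Rightarrow> real^'m^'m"
  assumes gm: "\<forall>w\<in>U. \<forall>i j. gm w $ i $ j = c * Bf R (av \<phi> i w) (av \<phi> j w)"

context sph begin

lemma gm_diff: assumes u: "u \<in> U" shows "(\<lambda>v. gm v $ i $ j) differentiable at u"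
proof (rule diff_local[OF U u])
  show "(\<lambda>v. c * Bf R (av \<phi> i v) (av \<phi> j v)) differentiable at u"
    by (intro differentiable_mult differentiable_const Bf_differentiable da[OF u])
  show "\<And>w. w \<in> U \<Longrightarrow> c * Bf R (av \<phi> i w) (av \<phi> j w) = gm w $ i $ j" using gm by simp
qed

lemma F6: assumes w: "w \<in> U"
  shows "partial k (\<lambda>v. gm v $ i $ j) w = c * (Bf R (bv \<phi> k i w) (av \<phi> j w) + Bf R (av \<phi> i w) (bv \<phi> k j w))"
proof -
  have "partial k (\<lambda>v. gm v $ i $ j) w = partial k (\<lambda>v. c * Bf R (av \<phi> i v) (av \<phi> j v)) w"
    by (rule partial_local[OF U w]) (simp add: gm)
  also have "\<dots> = c * partial k (\<lambda>v. Bf R (av \<phi> i v) (av \<phi> j v)) w"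
    by (intro partial_cmult Bf_differentiable da[OF w])
  also have "\<dots> = c * (Bf R (bv \<phi> k i w) (av \<phi> j w) + Bf R (av \<phi> i w) (bv \<phi> k j w))"
    by (subst Bf_partial[OF da[OF w] da[OF w]]) (simp add: av_comp bv_def)
  finally show ?thesis .
qed

lemma dgm_diff: assumes u: "u \<in> U" shows "partial k (\<lambda>v. gm v $ i $ j) differentiable at u"
proof (rule diff_local[OF U u])
  show "(\<lambda>w. c * (Bf R (bv \<phi> k i w) (av \<phi> j w) + Bf R (av \<phi> i w) (bv \<phi> k j w))) differentiable at u"
    by (intro differentiable_mult differentiable_add differentiable_const Bf_differentiable da[OF u] db[OF u])
  show "\<And>w. w \<in> U \<Longrightarrow> c * (Bf R (bv \<phi> k i w) (av \<phi> j w) + Bf R (av \<phi> i w) (bv \<phi> k j w))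
      = partial k (\<lambda>v. gm v $ i $ j) w" using F6 by simp
qed

lemma F7: assumes w: "w \<in> U" shows "det (gm w) \<noteq> 0"
proof -
  let ?D = "frechet_derivative \<phi> (at w)"
  have lin: "linear ((*v) (gm w))" by (rule matrix_vector_mul_linear)
  have "inj ((*v) (gm w))"
    unfolding linear_injective_0[OF lin]
  proof (intro allI impI)
    fix x assume x0: "gm w *v x = 0"
    have comp: "(gm w *v x) $ i = c * Bf R (av \<phi> i w) (?D x)" for i
      by (simp add: matrix_vector_mult_def gm w Dphi[OF w] Bf_sum_right Bf_scale_right
           sum_distrib_left algebra_simps)
    have "Bf R (?D x) (?D x) = (\<Sum>i\<in>UNIV. x$i * Bf R (av \<phi> i w) (?D x))"
      by (subst (1) Dphi[OF w]) (simp add: Bf_sum_left Bf_scale_left)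
    also have "\<dots> = 0" using x0 comp c by (simp add: vec_eq_iff)
    finally have "?D x = 0" using Rpos by (metis less_irrefl)
    moreover have "?D 0 = 0" using Dlin[OF w] linear_0 by blast
    ultimately show "x = 0" using imm w by (metis injD)
  qed
  then show ?thesis using det_nz_iff_inj[OF lin] by (simp add: matrix_of_matrix_vector_mul)
qed

lemma F9: assumes w: "w \<in> U"
  shows "bv \<phi> i j w = (\<Sum>m\<in>UNIV. christoffel gm w m i j *\<^sub>R av \<phi> m w)
            - (Bf R (av \<phi> i w) (av \<phi> j w) / r^2) *\<^sub>R \<phi> w"
proof -
  define v where "v = bv \<phi> i j w + (Bf R (av \<phi> i w) (av \<phi> j w) / r^2) *\<^sub>R \<phi> w"
  have "Bf R v (\<phi> w) = 0"
    unfolding v_def using r by (simp add: Bf_add_left Bf_scale_left F3[OF w] sph w Bsym[of "av \<phi> j w"])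
  then obtain z where z: "v = (\<Sum>m\<in>UNIV. z$m *\<^sub>R av \<phi> m w)" using F8[OF w] by blast
  have bl: "Bf R (av \<phi> l w) (bv \<phi> i j w) = (\<Sum>m\<in>UNIV. z$m * Bf R (av \<phi> l w) (av \<phi> m w))" for l
  proof -
    have "bv \<phi> i j w = v - (Bf R (av \<phi> i w) (av \<phi> j w) / r^2) *\<^sub>R \<phi> w" unfolding v_def by simp
    then show ?thesis
      by (simp add: Bf_diff_right Bf_scale_right Bsym[of "av \<phi> l w" "\<phi> w"] F2[OF w] z Bf_sum_right)
  qed
  have chr: "christoffel gm w m i j = (\<Sum>l\<in>UNIV. matrix_inv (gm w) $ m $ l * (c * Bf R (av \<phi> l w) (bv \<phi> i j w)))" for m
    unfolding christoffel_def
  proof (intro sum.cong refl)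
    fix l
    have e: "partial i (\<lambda>w. gm w $ l $ j) w + partial j (\<lambda>w. gm w $ l $ i) w - partial l (\<lambda>w. gm w $ i $ j) w
        = 2 * (c * Bf R (av \<phi> l w) (bv \<phi> i j w))"
      unfolding F6[OF w] F4[OF w, of l i] F4[OF w, of l j] F4[OF w, of j i]
      by (simp add: Bsym[of "bv \<phi> _ _ w"] algebra_simps)
    show "matrix_inv (gm w) $ m $ l / 2 * (partial i (\<lambda>w. gm w $ l $ j) w + partial j (\<lambda>w. gm w $ l $ i) w - partial l (\<lambda>w. gm w $ i $ j) w)
        = matrix_inv (gm w) $ m $ l * (c * Bf R (av \<phi> l w) (bv \<phi> i j w))"
      unfolding e by simp
  qed
  have "c * Bf R (av \<phi> l w) (bv \<phi> i j w) = (gm w *v z) $ l" for l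
    unfolding bl by (simp add: matrix_vector_mult_def gm w sum_distrib_left algebra_simps)
  then have "christoffel gm w m i j = (matrix_inv (gm w) *v (gm w *v z)) $ m" for m
    unfolding chr by (simp add: matrix_vector_mult_def)
  then have "christoffel gm w m i j = z $ m" for m
    by (simp add: matrix_vector_mul_assoc matrix_inv_props(2)[OF F7[OF w]])
  then show ?thesis using z unfolding v_def by (simp add: algebra_simps)
qed

lemma F10: assumes u: "u \<in> U" shows "(\<lambda>w. christoffel gm w m i j) differentiable at u"
  unfolding christoffel_def
  by (intro differentiable_sum_at differentiable_mult differentiable_divide differentiable_add
       differentiable_diff differentiable_const dgm_diff[OF u]
       inv_differentiable[OF U u gm_diff[OF u] F7]) auto

end

lemma partial_divc: "f differentiable at u \<Longrightarrow> partial i (\<lambda>w. f w / c) u = partial i f u / c"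
  using partial_cmult[of f u i "1/c"] by simp

context sph begin

lemma Step1: assumes u: "u \<in> U"
  shows "(\<chi> p. partial k (\<lambda>w. bv \<phi> l j w $ p) u)
    = (\<Sum>m\<in>UNIV. christoffel gm u m l j *\<^sub>R bv \<phi> k m u + partial k (\<lambda>w. christoffel gm w m l j) u *\<^sub>R av \<phi> m u)
      - (partial k (\<lambda>w. Bf R (av \<phi> l w) (av \<phi> j w) / r^2) u *\<^sub>R \<phi> u
         + (Bf R (av \<phi> l u) (av \<phi> j u) / r^2) *\<^sub>R av \<phi> k u)"
proof -
  have dB: "(\<lambda>w. Bf R (av \<phi> l w) (av \<phi> j w) / r^2) differentiable at u"
    by (intro differentiable_divide differentiable_const Bf_differentiable da[OF u]) (use r in simp)
  have "partial k (\<lambda>w. bv \<phi> l j w $ p) u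
     = (\<Sum>m\<in>UNIV. christoffel gm u m l j * bv \<phi> k m u $ p + partial k (\<lambda>w. christoffel gm w m l j) u * av \<phi> m u $ p)
      - (partial k (\<lambda>w. Bf R (av \<phi> l w) (av \<phi> j w) / r^2) u * \<phi> u $ p
         + (Bf R (av \<phi> l u) (av \<phi> j u) / r^2) * av \<phi> k u $ p)" for p
  proof -
    have "partial k (\<lambda>w. bv \<phi> l j w $ p) u
       = partial k (\<lambda>w. (\<Sum>m\<in>UNIV. christoffel gm w m l j * av \<phi> m w $ p)
            - (Bf R (av \<phi> l w) (av \<phi> j w) / r^2) * \<phi> w $ p) u"
      by (rule partial_local[OF U u]) (simp add: F9 sum_component)
    also have "\<dots> = partial k (\<lambda>w. \<Sum>m\<in>UNIV. christoffel gm w m l j * av \<phi> m w $ p) u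
            - partial k (\<lambda>w. (Bf R (av \<phi> l w) (av \<phi> j w) / r^2) * \<phi> w $ p) u"
      apply (rule partial_diff)
       apply (rule differentiable_sum_at)
       apply (rule differentiable_mult[OF F10[OF u] da[OF u]])
      apply (rule differentiable_mult[OF dB d0[OF u]])
      done
    also have "partial k (\<lambda>w. \<Sum>m\<in>UNIV. christoffel gm w m l j * av \<phi> m w $ p) u
       = (\<Sum>m\<in>UNIV. partial k (\<lambda>w. christoffel gm w m l j * av \<phi> m w $ p) u)"
      by (rule partial_sum) (simp_all add: differentiable_mult[OF F10[OF u] da[OF u]])
    also have "\<dots> = (\<Sum>m\<in>UNIV. christoffel gm u m l j * bv \<phi> k m u $ p + partial k (\<lambda>w. christoffel gm w m l j) u * av \<phi> m u $ p)"
      by (intro sum.cong refl, subst partial_mult[OF F10[OF u] da[OF u]]) (simp add: av_comp bv_def av_def)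
    also have "partial k (\<lambda>w. (Bf R (av \<phi> l w) (av \<phi> j w) / r^2) * \<phi> w $ p) u
       = partial k (\<lambda>w. Bf R (av \<phi> l w) (av \<phi> j w) / r^2) u * \<phi> u $ p
         + (Bf R (av \<phi> l u) (av \<phi> j u) / r^2) * av \<phi> k u $ p"
      by (subst partial_mult[OF dB d0[OF u]]) (simp add: av_def)
    finally show ?thesis .
  qed
  then show ?thesis by (simp add: vec_eq_iff sum_component)
qed

lemma Step2: assumes u: "u \<in> U"
  shows "Bf R (av \<phi> i u) (\<chi> p. partial k (\<lambda>w. bv \<phi> l j w $ p) u)
    = (\<Sum>m\<in>UNIV. christoffel gm u m l j * (\<Sum>q\<in>UNIV. christoffel gm u q k m * Bf R (av \<phi> i u) (av \<phi> q u)))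
      + (\<Sum>m\<in>UNIV. partial k (\<lambda>w. christoffel gm w m l j) u * Bf R (av \<phi> i u) (av \<phi> m u))
      - (Bf R (av \<phi> l u) (av \<phi> j u) / r^2) * Bf R (av \<phi> i u) (av \<phi> k u)"
proof -
  have bk: "Bf R (av \<phi> i u) (bv \<phi> k m u) = (\<Sum>q\<in>UNIV. christoffel gm u q k m * Bf R (av \<phi> i u) (av \<phi> q u))" for m
    by (subst F9[OF u]) (simp add: Bf_diff_right Bf_sum_right Bf_scale_right F2[OF u])
  show ?thesis
    unfolding Step1[OF u]
    by (simp add: Bf_diff_right Bf_add_right Bf_sum_right Bf_scale_right F2[OF u] bk sum.distrib)
qed

lemma Step3: assumes u: "u \<in> U"
  shows "(\<chi> p. partial k (\<lambda>w. bv \<phi> l j w $ p) u) = (\<chi> p. partial l (\<lambda>w. bv \<phi> k j w $ p) u)"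
proof -
  have "partial k (partial l (partial j (\<lambda>v. \<phi> v $ p))) u = partial l (partial k (partial j (\<lambda>v. \<phi> v $ p))) u" for p
  proof (rule schwarz[OF U u])
    show "\<forall>w\<in>U. partial j (\<lambda>v. \<phi> v $ p) differentiable at w" using d1 by blast
    show "\<forall>w\<in>U. partial l (partial j (\<lambda>v. \<phi> v $ p)) differentiable at w" using d2 by blast
    show "\<forall>w\<in>U. partial k (partial j (\<lambda>v. \<phi> v $ p)) differentiable at w" using d2 by blast
    show "isCont (partial k (partial l (partial j (\<lambda>v. \<phi> v $ p)))) u"
      using d3[OF u] differentiable_imp_continuous_within by blast
    show "isCont (partial l (partial k (partial j (\<lambda>v. \<phi> v $ p)))) u"
      using d3[OF u] differentiable_imp_continuous_within by blast
  qed
  then show ?thesis by (simp add: bv_comp vec_eq_iff)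
qed

end

lemma sum_swap_aux:
  fixes G A :: "'m::finite \<Rightarrow> real" and B :: "'m \<Rightarrow> 'm \<Rightarrow> real"
  shows "(\<Sum>m\<in>UNIV. G m * (\<Sum>p\<in>UNIV. A p * B m p)) = (\<Sum>m\<in>UNIV. A m * (\<Sum>q\<in>UNIV. B q m * G q))"
  apply (simp add: sum_distrib_left)
  apply (subst sum.swap)
  apply (simp add: ac_simps)
  done

context sph begin

lemma F11: assumes u: "u \<in> U"
  shows "riemann gm u i j k l = (gm u$i$k * gm u$j$l - gm u$i$l * gm u$j$k) / (c * r^2)"
proof -
  define G where "G a b = Bf R (av \<phi> a u) (av \<phi> b u)" for a b
  define \<Gamma> where "\<Gamma> m a b = christoffel gm u m a b" for m a b
  define dG where "dG x m a b = partial x (\<lambda>w. christoffel gm w m a b) u" for x m a b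
  have gmG: "gm u $ a $ b = c * G a b" for a b using gm u unfolding G_def by simp
  have Gsym: "G a b = G b a" for a b unfolding G_def by (rule Bsym)
  have E: "(\<Sum>m\<in>UNIV. \<Gamma> m l j * (\<Sum>q\<in>UNIV. \<Gamma> q k m * G i q)) + (\<Sum>m\<in>UNIV. dG k m l j * G i m) - G l j / r^2 * G i k
     = (\<Sum>m\<in>UNIV. \<Gamma> m k j * (\<Sum>q\<in>UNIV. \<Gamma> q l m * G i q)) + (\<Sum>m\<in>UNIV. dG l m k j * G i m) - G k j / r^2 * G i l"
    using Step2[OF u, of i k l j] Step2[OF u, of i l k j] Step3[OF u, of k l j]
    unfolding G_def \<Gamma>_def dG_def by simp
  have S1: "(\<Sum>m\<in>UNIV. G i m * (\<Sum>p\<in>UNIV. \<Gamma> p l j * \<Gamma> m k p)) = (\<Sum>m\<in>UNIV. \<Gamma> m l j * (\<Sum>q\<in>UNIV. \<Gamma> q k m * G i q))"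
    by (rule sum_swap_aux)
  have S2: "(\<Sum>m\<in>UNIV. G i m * (\<Sum>p\<in>UNIV. \<Gamma> p k j * \<Gamma> m l p)) = (\<Sum>m\<in>UNIV. \<Gamma> m k j * (\<Sum>q\<in>UNIV. \<Gamma> q l m * G i q))"
    by (rule sum_swap_aux)
  have rie: "riemann gm u i j k l = c * ((\<Sum>m\<in>UNIV. G i m * dG k m l j) - (\<Sum>m\<in>UNIV. G i m * dG l m k j)
      + (\<Sum>m\<in>UNIV. G i m * (\<Sum>p\<in>UNIV. \<Gamma> p l j * \<Gamma> m k p)) - (\<Sum>m\<in>UNIV. G i m * (\<Sum>p\<in>UNIV. \<Gamma> p k j * \<Gamma> m l p)))"
  proof -
    have "riemann gm u i j k l = (\<Sum>m\<in>UNIV. c * (G i m * dG k m l j - G i m * dG l m k j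
          + G i m * (\<Sum>p\<in>UNIV. \<Gamma> p l j * \<Gamma> m k p) - G i m * (\<Sum>p\<in>UNIV. \<Gamma> p k j * \<Gamma> m l p)))"
      unfolding riemann_def riemann_up_def gmG \<Gamma>_def dG_def
      by (intro sum.cong refl) (simp add: sum_subtractf algebra_simps)
    also have "\<dots> = c * ((\<Sum>m\<in>UNIV. G i m * dG k m l j) - (\<Sum>m\<in>UNIV. G i m * dG l m k j)
      + (\<Sum>m\<in>UNIV. G i m * (\<Sum>p\<in>UNIV. \<Gamma> p l j * \<Gamma> m k p)) - (\<Sum>m\<in>UNIV. G i m * (\<Sum>p\<in>UNIV. \<Gamma> p k j * \<Gamma> m l p)))"
      by (simp only: sum_distrib_left[symmetric] sum_subtractf sum.distrib)
    finally show ?thesis .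
  qed
  have "(\<Sum>m\<in>UNIV. G i m * dG k m l j) - (\<Sum>m\<in>UNIV. G i m * dG l m k j)
      + (\<Sum>m\<in>UNIV. G i m * (\<Sum>p\<in>UNIV. \<Gamma> p l j * \<Gamma> m k p)) - (\<Sum>m\<in>UNIV. G i m * (\<Sum>p\<in>UNIV. \<Gamma> p k j * \<Gamma> m l p))
      = G l j / r^2 * G i k - G k j / r^2 * G i l"
    using E S1 S2 by (simp add: mult.commute[of "G i _"])
  then have "riemann gm u i j k l = c * (G l j / r^2 * G i k - G k j / r^2 * G i l)"
    using rie by simp
  also have "\<dots> = (gm u$i$k * gm u$j$l - gm u$i$l * gm u$j$k) / (c * r^2)"
    unfolding gmG using c r Gsym[of j l] Gsym[of j k] by (simp add: field_simps power2_eq_square)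
  finally show ?thesis .
qed

end

lemma quad_split:
  fixes L x y :: "'n::finite \<Rightarrow> real" and R :: "real^'n^'n"
  shows "(\<Sum>p\<in>UNIV. \<Sum>q\<in>UNIV. (R$p$q / a - K * L p * L q) * x p * y q)
    = (\<Sum>p\<in>UNIV. \<Sum>q\<in>UNIV. R$p$q * x p * y q) / a - K * ((\<Sum>p\<in>UNIV. L p * x p) * (\<Sum>q\<in>UNIV. L q * y q))"
proof -
  have "(\<Sum>p\<in>UNIV. \<Sum>q\<in>UNIV. (R$p$q / a - K * L p * L q) * x p * y q)
      = (\<Sum>p\<in>UNIV. \<Sum>q\<in>UNIV. R$p$q * x p * y q / a - K * ((L p * x p) * (L q * y q)))"
    by (intro sum.cong refl) (simp add: algebra_simps)
  also have "\<dots> = (\<Sum>p\<in>UNIV. \<Sum>q\<in>UNIV. R$p$q * x p * y q) / a - K * (\<Sum>p\<in>UNIV. \<Sum>q\<in>UNIV. (L p * x p) * (L q * y q))"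
    by (simp only: sum_subtractf sum_divide_distrib sum_distrib_left)
  also have "(\<Sum>p\<in>UNIV. \<Sum>q\<in>UNIV. (L p * x p) * (L q * y q)) = (\<Sum>p\<in>UNIV. L p * x p) * (\<Sum>q\<in>UNIV. L q * y q)"
    by (rule sum_product[symmetric])
  finally show ?thesis .
qed

theorem theorem2p17:
  fixes R :: "real^'n^'n" and nN :: 'n and g r :: real
    and U :: "(real^'m) set" and \<phi> :: "real^'m \<Rightarrow> real^'n"
  assumes dimN: "CARD('n) \<ge> 2"
    and dimM: "CARD('m) + 1 = CARD('n)"
    and Rsym: "\<forall>p q. R$p$q = R$q$p"
    and Rpos: "\<forall>x::real^'n. x \<noteq> 0 \<longrightarrow> (\<Sum>p\<in>UNIV. \<Sum>q\<in>UNIV. R$p$q * x$p * x$q) > 0"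
    and RNN: "R$nN$nN = 1"
    and RNa: "\<forall>a. a \<noteq> nN \<longrightarrow> R$nN$a = 0"
    and g: "-2 < g" "g < 2"
    and r: "r > 0"
    and U: "open U"
    and smooth: "\<forall>p. smooth_on U (\<lambda>u. \<phi> u $ p)"
    and immersion: "\<forall>u\<in>U. inj (frechet_derivative \<phi> (at u))"
    and onsphere: "\<forall>u\<in>U. Sfun R (\<phi> u) = r"
  shows "\<forall>u\<in>U. \<forall>i j k l.
           riemann (indmetric R g \<phi>) u i j k l
             = (hpar g)^2 / r^2 *
               (indmetric R g \<phi> u $ i $ k * indmetric R g \<phi> u $ j $ l
                - indmetric R g \<phi> u $ i $ l * indmetric R g \<phi> u $ j $ k)"
proof -
  define h where "h = hpar g"
  have "g^2 < 4"
  proof -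
    have "\<bar>g\<bar> < 2" using g by auto
    then have "\<bar>g\<bar>^2 < 2^2" by (intro power_strict_mono) auto
    then show ?thesis by simp
  qed
  then have h: "h > 0" unfolding h_def hpar_def by simp
  define c where "c = 1 / h^2"
  have c: "c > 0" unfolding c_def using h by simp
  have sph: "\<forall>u\<in>U. Bf R (\<phi> u) (\<phi> u) = r^2"
  proof
    fix u assume "u \<in> U"
    then have e: "sqrt (Bf R (\<phi> u) (\<phi> u)) = r" using onsphere by (simp add: Sfun_def Bf_def)
    then have "\<not> sqrt (Bf R (\<phi> u) (\<phi> u)) < 0" using r by simp
    then have "Bf R (\<phi> u) (\<phi> u) \<ge> 0" by (simp add: real_sqrt_lt_0_iff)
    then have "(sqrt (Bf R (\<phi> u) (\<phi> u)))^2 = Bf R (\<phi> u) (\<phi> u)" by (rule real_sqrt_pow2)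
    then show "Bf R (\<phi> u) (\<phi> u) = r^2" using e by simp
  qed
  interpret s0: sph0 R r c U \<phi>
    by unfold_locales (use dimM Rsym Rpos r c U smooth immersion sph in \<open>auto simp: Bf_def\<close>)
  have gmeq: "\<forall>w\<in>U. \<forall>i j. indmetric R g \<phi> w $ i $ j = c * Bf R (av \<phi> i w) (av \<phi> j w)"
  proof (intro ballI allI)
    fix w i j assume w: "w \<in> U"
    have L0: "(\<Sum>p\<in>UNIV. Lcov R (\<phi> w) p * av \<phi> a w $ p) = 0" for a
    proof -
      have "(\<Sum>p\<in>UNIV. Lcov R (\<phi> w) p * av \<phi> a w $ p) = Bf R (av \<phi> a w) (\<phi> w) / Sfun R (\<phi> w)"
        unfolding Lcov_def Bf_def
        by (simp add: sum_divide_distrib sum_distrib_left sum_distrib_right algebra_simps)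
      then show ?thesis using s0.F2[OF w] by simp
    qed
    have "indmetric R g \<phi> w $ i $ j = (\<Sum>p\<in>UNIV. \<Sum>q\<in>UNIV. (R$p$q / h^2 - (Gpar g)^2 / 4 * Lcov R (\<phi> w) p * Lcov R (\<phi> w) q)
        * av \<phi> i w $ p * av \<phi> j w $ q)"
      unfolding indmetric_def nmetric_def h_def by (simp add: av_def)
    also have "\<dots> = Bf R (av \<phi> i w) (av \<phi> j w) / h^2"
      unfolding quad_split L0 by (simp add: Bf_def)
    finally show "indmetric R g \<phi> w $ i $ j = c * Bf R (av \<phi> i w) (av \<phi> j w)"
      unfolding c_def by simp
  qed
  interpret s: sph R r c U \<phi> "indmetric R g \<phi>"
    by unfold_locales (rule gmeq)
  show ?thesis
  proof (intro ballI allI)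
    fix u i j k l assume u: "u \<in> U"
    show "riemann (indmetric R g \<phi>) u i j k l
             = (hpar g)^2 / r^2 *
               (indmetric R g \<phi> u $ i $ k * indmetric R g \<phi> u $ j $ l
                - indmetric R g \<phi> u $ i $ l * indmetric R g \<phi> u $ j $ k)"
      unfolding s.F11[OF u] h_def[symmetric] c_def using h r by (simp add: field_simps)
  qed
qed

end
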